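(* Let $G=(V,E)$ be a simple undirected graph with vertex set $V$ and edge set $E$, let $A$ be its vertex-edge incidence matrix, and let $k>4$ be an integer. Suppose every connected component of $G$ has at least four vertices, $|E| = \binom{k}{2}$, and $\operatorname{rank}(A) = k$. Then $G$ has exactly $|V| = k$ vertices.
   Context: The vertex-edge incidence matrix $A$ of $G$ has rows indexed by $V$ and columns indexed by $E$, with entry $a_{ie} = 1$ if vertex $i$ is an endpoint of edge $e$ and $0$ otherwise; its rank is taken over the real (equivalently rational) numbers. *)

theory Defs
  imports "HOL-Analysis.Analysis"
begin

text \<open>A simple undirected graph on the finite vertex type 'v (V = UNIV):
  the edge set E is a set of 2-element vertex sets.\<close>
definition simple_graph :: "'v set set \<Rightarrow> bool" where
  "simple_graph E \<longleftrightarrow> (\<forall>e\<in>E. card e = 2)"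

definition adjacent :: "'v set set \<Rightarrow> 'v \<Rightarrow> 'v \<Rightarrow> bool" where
  "adjacent E u v \<longleftrightarrow> {u, v} \<in> E"

definition component :: "'v set set \<Rightarrow> 'v \<Rightarrow> 'v set" where
  "component E v = {u. (adjacent E)\<^sup>*\<^sup>* v u}"

definition incidence_col :: "'v::finite set \<Rightarrow> real ^ 'v" where
  "incidence_col e = (\<chi> i. if i \<in> e then 1 else 0)"

text \<open>Rank (over the reals) of the incidence matrix = dimension of its column space.\<close>
definition incidence_rank :: "'v::finite set set \<Rightarrow> nat" where
  "incidence_rank E = dim (incidence_col ` E)"

end

theory Submission
  imports Defs
begin

lemma numeric:
  fixes t h :: "'a \<Rightarrow> int"
  assumes "finite I" "\<forall>i\<in>I. t i \<ge> 3" "\<forall>i\<in>I. h i \<le> 2 * t i * (t i - 1) + 4"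
  shows "I \<noteq> {} \<longrightarrow> (sum h I \<le> 2 * sum t I * (sum t I - 1) + 4
          \<and> (card I \<ge> 2 \<longrightarrow> sum h I \<le> 2 * sum t I * (sum t I - 1) - 28))"
  using assms
proof (induction I rule: finite_induct)
  case empty
  then show ?case by simp
next
  case (insert x F)
  show ?case
  proof (cases "F = {}")
    case True
    then show ?thesis using insert by simp
  next
    case False
    have IH: "sum h F \<le> 2 * sum t F * (sum t F - 1) + 4" using insert False by auto
    have tF: "sum t F \<ge> 3"
    proof -
      obtain y where "y \<in> F" using False by auto
      then have "sum t F \<ge> t y" using insert by (intro member_le_sum) auto
      then show ?thesis using insert \<open>y \<in> F\<close> by auto
    qed
    have tx: "t x \<ge> 3" "h x \<le> 2 * t x * (t x - 1) + 4" using insert by auto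
    have s1: "sum h (insert x F) = h x + sum h F" "sum t (insert x F) = t x + sum t F"
      using insert by auto
    have "sum t F * t x \<ge> 3 * 3" using tF tx
      by (intro mult_mono) auto
    then have "sum h (insert x F) \<le> 2 * sum t (insert x F) * (sum t (insert x F) - 1) - 28"
      unfolding s1 using IH tx by (simp add: algebra_simps)
    then show ?thesis by simp
  qed
qed

lemma adj_sym: "adjacent E u v \<Longrightarrow> adjacent E v u"
  by (simp add: adjacent_def insert_commute)

lemma comp_self: "u \<in> component E u"
  by (simp add: component_def)

lemma comp_sym: assumes "v \<in> component E u" shows "u \<in> component E v"
proof -
  have "(adjacent E)\<^sup>*\<^sup>* u v" using assms by (simp add: component_def)
  then have "(adjacent E)\<^sup>*\<^sup>* v u"
    by (induction rule: rtranclp_induct) (auto intro: converse_rtranclp_into_rtranclp adj_sym)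
  then show ?thesis by (simp add: component_def)
qed

lemma comp_eq: assumes "v \<in> component E u" shows "component E v = component E u"
proof -
  have uv: "(adjacent E)\<^sup>*\<^sup>* u v" using assms by (simp add: component_def)
  have vu: "(adjacent E)\<^sup>*\<^sup>* v u" using comp_sym[OF assms] by (simp add: component_def)
  show ?thesis unfolding component_def
    using uv vu rtranclp_trans[of "adjacent E"] by blast
qed

lemma sum_ind: "(\<Sum>i\<in>(UNIV::'v::finite set). (if i \<in> A then 1 else 0) * f i) = (\<Sum>i\<in>A. (f i::real))"
proof -
  have "(\<Sum>i\<in>(UNIV::'v set). (if i \<in> A then 1 else 0) * f i) = (\<Sum>i\<in>UNIV. if i \<in> A then f i else 0)"
    by (rule sum.cong) auto
  also have "\<dots> = sum f A" by (simp add: sum.If_cases)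
  finally show ?thesis .
qed

lemma edge_sum:
  assumes "simple_graph E" "{u,v} \<in> E" "\<forall>e\<in>E. incidence_col e \<bullet> y = 0"
  shows "y$u + y$v = 0"
proof -
  have "card {u,v} = 2" using assms unfolding simple_graph_def by auto
  then have uv: "u \<noteq> v" by auto
  have "incidence_col {u,v} \<bullet> y = (\<Sum>i\<in>UNIV. (if i \<in> {u,v} then 1 else 0) * y$i)"
    by (simp add: inner_vec_def incidence_col_def)
  also have "\<dots> = (\<Sum>i\<in>{u,v}. y$i)"
    by (rule sum_ind)
  also have "\<dots> = y$u + y$v" using uv by simp
  finally show ?thesis using assms by auto
qed

lemma walk_prop:
  assumes "simple_graph E" "\<forall>e\<in>E. incidence_col e \<bullet> y = 0" "\<forall>e\<in>E. incidence_col e \<bullet> z = 0"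
    and "v \<in> component E u"
  shows "y$v * z$u = y$u * z$v \<and> \<bar>y$v\<bar> = \<bar>y$u\<bar>"
proof -
  have "(adjacent E)\<^sup>*\<^sup>* u v" using assms by (simp add: component_def)
  then show ?thesis
  proof (induction rule: rtranclp_induct)
    case base
    then show ?case by simp
  next
    case (step v w)
    have "{v,w} \<in> E" using step by (simp add: adjacent_def)
    then have "y$v + y$w = 0" "z$v + z$w = 0" using edge_sum assms by blast+
    then have "y$w = - y$v" "z$w = - z$v" by linarith+
    then show ?case using step.IH by simp
  qed
qed

lemma span_axis:
  fixes c :: "'v::finite \<Rightarrow> real"
  assumes "\<forall>i. i \<notin> R \<longrightarrow> c i = 0"
  shows "(\<chi> i. c i) \<in> span ((\<lambda>i. axis i 1) ` R)"
proof -
  have "(\<chi> i. c i) = (\<Sum>i\<in>R. c i *\<^sub>R axis i 1)"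
    using assms by (auto simp: vec_eq_iff sum_component axis_def if_distrib sum.If_cases cong: if_cong)
  also have "\<dots> \<in> span ((\<lambda>i. axis i (1::real)) ` R)"
    by (intro span_sum span_scale span_base) auto
  finally show ?thesis .
qed

lemma two_choose: "2 * (n choose 2) = n * (n - 1)"
proof -
  have "even (n * (n - 1))" by (cases n) auto
  then show ?thesis by (simp add: choose_two)
qed

theorem lemma2:
  fixes E :: "'v::finite set set" and k :: nat
  assumes "simple_graph E"
    and "k > 4"
    and "\<forall>v. card (component E v) \<ge> 4"
    and "card E = k choose 2"
    and "incidence_rank E = k"
  shows "CARD('v) = k"
proof -
  define S where "S = span (incidence_col ` E)"
  define W where "W = {y. \<forall>x\<in>S. orthogonal x y}"
  have subS: "subspace S" unfolding S_def by (rule subspace_span)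
  have dimS: "dim S = k" using assms(5) unfolding S_def incidence_rank_def by simp
  have dimW: "dim W + k = CARD('v)"
    using dim_subspace_orthogonal_to_vectors[OF subS subspace_UNIV] dimS unfolding W_def by simp
  have subW: "subspace W" unfolding W_def by (rule subspace_orthogonal_to_vectors)
  have Wk: "\<forall>e\<in>E. incidence_col e \<bullet> y = 0" if "y \<in> W" for y
    using that unfolding W_def S_def orthogonal_def by (auto intro: span_base)
  define CC where "CC = range (component E)"
  define B where "B = {C\<in>CC. \<exists>y\<in>W. \<exists>u\<in>C. y$u \<noteq> 0}"
  define rep where "rep C = (SOME u. u \<in> C)" for C :: "'v set"
  have rep_in: "rep C \<in> C" if CCin: "C \<in> CC" for C
  proof -
    obtain v where "C = component E v" using CCin CC_def by auto
    then have "v \<in> C" by (simp add: comp_self)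
    then show ?thesis unfolding rep_def by (rule someI)
  qed
  define R where "R = rep ` B"
  define f where "f y = (\<chi> i. if i \<in> R then y$i else (0::real))" for y :: "real^'v"
  have lin: "linear f"
    by (rule linearI) (auto simp: f_def vec_eq_iff)
  have inj: "inj_on f (span W)"
  proof -
    have spW: "span W = W" using subW span_eq_iff by blast
    moreover have "inj_on f W"
    proof (subst linear_inj_on_iff_eq_0[OF lin subW], intro ballI impI)
      fix y assume yW: "y \<in> W" and fy: "f y = 0"
      show "y = 0"
      proof (subst vec_eq_iff, intro allI)
        fix u
        define C where "C = component E u"
        have CCC: "C \<in> CC" unfolding C_def CC_def by auto
        show "y$u = 0$u"
        proof (cases "C \<in> B")
          case False
          then show ?thesis using yW CCC comp_self[of u E] unfolding B_def C_def by auto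
        next
          case True
          then obtain z w where zW: "z \<in> W" and wC: "w \<in> C" and zw: "z$w \<noteq> 0"
            unfolding B_def by auto
          have rC: "rep C \<in> C" using rep_in CCC by auto
          have rR: "rep C \<in> R" using True R_def by auto
          have "(f y)$(rep C) = 0" using fy by simp
          then have yr: "y$(rep C) = 0" using rR unfolding f_def by simp
          have "component E w = C" using comp_eq[of w E u] wC unfolding C_def by simp
          then have "rep C \<in> component E w" using rC by simp
          then have "\<bar>z$(rep C)\<bar> = \<bar>z$w\<bar>" using walk_prop[OF assms(1) Wk[OF zW] Wk[OF zW]] by simp
          then have zr: "z$(rep C) \<noteq> 0" using zw by auto
          have uc: "u \<in> component E (rep C)" using comp_sym[of "rep C" E u] rC unfolding C_def by simp
          have "y$u * z$(rep C) = y$(rep C) * z$u"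
            using walk_prop[OF assms(1) Wk[OF yW] Wk[OF zW] uc] by (rule conjunct1)
          then show ?thesis using yr zr by simp
        qed
      qed
    qed
    ultimately show ?thesis by (simp only: spW)
  qed
  have "dim W = dim (f ` W)" using dim_image_eq[OF lin inj] by simp
  also have "\<dots> \<le> card ((\<lambda>i. axis i (1::real)) ` R)"
  proof (rule dim_le_card)
    show "f ` W \<subseteq> span ((\<lambda>i. axis i 1) ` R)" unfolding f_def by (auto intro!: span_axis)
  qed auto
  also have "\<dots> \<le> card R" by (rule card_image_le) auto
  also have "\<dots> \<le> card B" unfolding R_def by (rule card_image_le) auto
  finally have WB: "dim W \<le> card B" .
  have nB: "CARD('v) \<le> k + card B" using dimW WB by linarith
  have nk: "k \<le> CARD('v)" using dimW by simp
  have finCC: "finite CC" by simp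
  have disj: "pairwise disjnt CC"
  proof (unfold pairwise_def disjnt_def, intro ballI impI)
    fix C D assume "C \<in> CC" "D \<in> CC" "C \<noteq> D"
    then obtain a b where ab: "C = component E a" "D = component E b" unfolding CC_def by auto
    show "C \<inter> D = {}"
    proof (rule ccontr)
      assume "C \<inter> D \<noteq> {}"
      then obtain x where "x \<in> C" "x \<in> D" by blast
      then have "component E x = C" "component E x = D"
        using comp_eq[of x E a] comp_eq[of x E b] ab by auto
      then show False using \<open>C \<noteq> D\<close> by simp
    qed
  qed
  have UCC: "\<Union>CC = UNIV"
  proof (rule sym, rule UNIV_eq_I)
    fix x show "x \<in> \<Union>CC" using comp_self[of x E] unfolding CC_def by blast
  qed
  have sumCC: "(\<Sum>C\<in>CC. card C) = CARD('v)" using card_Union_disjoint[OF disj] UCC by simp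
  define EC where "EC C = {e\<in>E. e \<subseteq> C}" for C
  have Eun: "E = (\<Union>C\<in>CC. EC C)"
  proof
    show "E \<subseteq> (\<Union>C\<in>CC. EC C)"
    proof
      fix e assume eE: "e \<in> E"
      then obtain u v where e: "e = {u,v}" using assms(1) unfolding simple_graph_def card_2_iff by blast
      then have "v \<in> component E u" using eE by (auto simp: component_def adjacent_def)
      then have "e \<subseteq> component E u" using e comp_self by auto
      then show "e \<in> (\<Union>C\<in>CC. EC C)" using eE unfolding EC_def CC_def by auto
    qed
  qed (auto simp: EC_def)
  have cardE: "card E \<le> (\<Sum>C\<in>CC. card (EC C))" using card_UN_le[OF finCC] Eun by metis
  define t where "t C = int (card C) - (if C \<in> B then 1 else 0)" for C
  define h where "h C = (if C \<in> B then (t C + 1)^2 else 2 * t C * (t C - 1))" for C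
  have t3: "t C \<ge> 3" if CCin: "C \<in> CC" for C
  proof -
    obtain v where "C = component E v" using CCin CC_def by auto
    then have "card C \<ge> 4" using assms(3) by auto
    then show ?thesis unfolding t_def by auto
  qed
  have ECb: "4 * int (card (EC C)) \<le> h C" if CCin: "C \<in> CC" for C
  proof (cases "C \<in> B")
    case True
    then obtain z w where zW: "z \<in> W" and wC: "w \<in> C" and zw: "z$w \<noteq> 0" unfolding B_def by auto
    obtain v where Cv: "C = component E v" using CCin CC_def by auto
    have nz: "z$u \<noteq> 0" if "u \<in> C" for u
    proof -
      have "component E w = C" using comp_eq[of w E v] wC Cv by simp
      then have "u \<in> component E w" using that by simp
      then have "\<bar>z$u\<bar> = \<bar>z$w\<bar>" using walk_prop[OF assms(1) Wk[OF zW] Wk[OF zW]] by simp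
      then show ?thesis using zw by auto
    qed
    define P where "P = {u\<in>C. z$u > 0}"
    define N where "N = {u\<in>C. z$u < 0}"
    have sub: "EC C \<subseteq> (\<lambda>(a,b). {a,b}) ` (P \<times> N)"
    proof
      fix e assume "e \<in> EC C"
      then have eE: "e \<in> E" and eC: "e \<subseteq> C" by (auto simp: EC_def)
      then obtain a b where e: "e = {a,b}" using assms(1) unfolding simple_graph_def card_2_iff by blast
      have s0: "z$a + z$b = 0" using edge_sum[OF assms(1) _ Wk[OF zW]] eE e by blast
      have a0: "z$a \<noteq> 0" using nz eC e by auto
      have ab: "a \<in> C" "b \<in> C" using eC e by auto
      show "e \<in> (\<lambda>(a,b). {a,b}) ` (P \<times> N)"
      proof (cases "z$a > 0")
        case True
        then have "(a,b) \<in> P \<times> N" using s0 ab unfolding P_def N_def by auto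
        then show ?thesis unfolding e by force
      next
        case False
        then have "(b,a) \<in> P \<times> N" using s0 ab a0 unfolding P_def N_def by auto
        then have "{b,a} \<in> (\<lambda>(a,b). {a,b}) ` (P \<times> N)" by force
        then show ?thesis unfolding e by (simp add: insert_commute)
      qed
    qed
    have "card (EC C) \<le> card ((\<lambda>(a,b). {a,b}) ` (P \<times> N))" using sub by (intro card_mono) auto
    also have "\<dots> \<le> card (P \<times> N)" by (rule card_image_le) auto
    also have "\<dots> = card P * card N" by (rule card_cartesian_product)
    finally have c1: "card (EC C) \<le> card P * card N" .
    have "P \<union> N = C" using nz unfolding P_def N_def by force
    moreover have "P \<inter> N = {}" unfolding P_def N_def by auto
    ultimately have c2: "card C = card P + card N" by (metis card_Un_disjoint finite)
    have "4 * int (card (EC C)) \<le> 4 * (int (card P) * int (card N))" using c1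
      by (metis of_nat_le_iff of_nat_mult mult_le_cancel_left_pos zero_less_numeral)
    also have "\<dots> \<le> (int (card P) + int (card N))^2"
      using sum_squares_ge_zero[of "int (card P) - int (card N)" 0] by (simp add: power2_eq_square algebra_simps)
    also have "\<dots> = h C" unfolding h_def t_def using True c2 by simp
    finally show ?thesis .
  next
    case False
    have "EC C \<subseteq> {D. D \<subseteq> C \<and> card D = 2}" using assms(1) unfolding EC_def simple_graph_def by auto
    then have "card (EC C) \<le> card {D. D \<subseteq> C \<and> card D = 2}" by (intro card_mono) auto
    also have "\<dots> = card C choose 2" by (rule n_subsets) simp
    finally have "2 * card (EC C) \<le> card C * (card C - 1)" using two_choose[of "card C"] by linarith
    then have n1: "int (2 * card (EC C)) \<le> int (card C * (card C - 1))" by (simp only: of_nat_le_iff)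
    have c1: "card C \<ge> 1" using t3[OF CCin] False unfolding t_def by simp
    have "int (card C - 1) = int (card C) - 1" using c1 by simp
    then have "2 * int (card (EC C)) \<le> int (card C) * (int (card C) - 1)"
      using n1 by (simp only: of_nat_mult of_nat_numeral)
    then show ?thesis unfolding h_def t_def using False by simp
  qed
  have hb: "h C \<le> 2 * t C * (t C - 1) + 4" if CCin: "C \<in> CC" for C
  proof -
    have "(t C - 1) * (t C - 3) \<ge> 0" using t3[OF CCin] by simp
    then show ?thesis unfolding h_def by (simp add: power2_eq_square algebra_simps)
  qed
  have E4: "4 * int (card E) \<le> sum h CC"
  proof -
    have "4 * int (card E) \<le> 4 * (\<Sum>C\<in>CC. int (card (EC C)))" using cardE
      by (simp flip: of_nat_sum)
    also have "\<dots> = (\<Sum>C\<in>CC. 4 * int (card (EC C)))" by (simp add: sum_distrib_left)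
    also have "\<dots> \<le> sum h CC" using ECb by (intro sum_mono) auto
    finally show ?thesis .
  qed
  have BCC: "B \<subseteq> CC" unfolding B_def by auto
  have M: "sum t CC = int (CARD('v)) - int (card B)"
  proof -
    have "sum t CC = (\<Sum>C\<in>CC. int (card C)) - (\<Sum>C\<in>CC. if C \<in> B then 1 else 0)"
      unfolding t_def by (simp add: sum_subtractf)
    also have "(\<Sum>C\<in>CC. if C \<in> B then (1::int) else 0) = int (card B)"
      using BCC by (simp add: sum.If_cases Int_absorb1)
    finally show ?thesis using sumCC by (simp flip: of_nat_sum)
  qed
  have Ek: "4 * int (card E) = 2 * int k * (int k - 1)"
  proof -
    have "2 * card E = k * (k - 1)" using assms(4) two_choose by simp
    then have n1: "int (2 * card E) = int (k * (k - 1))" by (simp only:)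
    have "int (k - 1) = int k - 1" using assms(2) by simp
    then have "2 * int (card E) = int k * (int k - 1)"
      using n1 by (simp only: of_nat_mult of_nat_numeral)
    then show ?thesis by simp
  qed
  show ?thesis
  proof (rule ccontr)
    assume "CARD('v) \<noteq> k"
    then have "card B \<ge> 1" using nB nk by linarith
    then have Bne: "B \<noteq> {}" by auto
    have Mk: "sum t CC \<le> int k" using M nB by linarith
    have CCne: "CC \<noteq> {}" unfolding CC_def by simp
    have num: "sum h CC \<le> 2 * sum t CC * (sum t CC - 1) + 4 \<and> (card CC \<ge> 2 \<longrightarrow> sum h CC \<le> 2 * sum t CC * (sum t CC - 1) - 28)"
      using numeric[of CC t h] finCC t3 hb CCne by blast
    have k5: "int k \<ge> 5" using assms(2) by simp
    show False
    proof (cases "card CC \<ge> 2")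
      case True
      then have h1: "sum h CC \<le> 2 * sum t CC * (sum t CC - 1) - 28" using num by blast
      have Mnn: "sum t CC \<ge> 0" using t3 by (intro sum_nonneg) fastforce
      have "(int k - sum t CC) * (int k + sum t CC - 1) \<ge> 0" using Mk Mnn k5 by simp
      then have "sum t CC * (sum t CC - 1) \<le> int k * (int k - 1)" by (simp add: algebra_simps)
      then show False using E4 Ek h1 by linarith
    next
      case False
      have "card CC \<noteq> 0" using CCne finCC by simp
      then have "card CC = 1" using False by linarith
      then obtain C0 where C0: "CC = {C0}" using card_1_singletonE by blast
      then have "B = {C0}" using BCC Bne by auto
      then have hs: "sum h CC = (t C0 + 1)^2" "sum t CC = t C0" unfolding h_def using C0 by auto
      have "t C0 \<ge> 3" using t3 C0 by auto
      then have "(t C0 + 1)^2 \<le> (int k + 1)^2" using Mk hs by (intro power_mono) auto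
      moreover have "(int k + 1)^2 < 2 * int k * (int k - 1)"
      proof -
        have "int k * (int k - 4) \<ge> 5 * 1" using k5 by (intro mult_mono) auto
        then show ?thesis by (simp add: power2_eq_square algebra_simps)
      qed
      ultimately show False using E4 Ek hs by linarith
    qed
  qed
qed

end
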